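(* Let $F$ be a field of characteristic $\neq 2$ and let $(V,q)$ be the orthogonal direct sum of nondegenerate quadratic spaces $(V_1,q_1)$ and $(V_2,q_2)$, so that $C(V_i,q_i)\subseteq C(V,q)$. Let $t_i\in\Gamma^+(V_i,q_i)$ and suppose there exist $s_i\in\Gamma(V_i,q_i)$ with $s_it_is_i^{-1}=N(t_i)t_i^{-1}$ for $i=1,2$. Let $t=t_1t_2\in\Gamma^+(V,q)$ and $s=s_1s_2$. Then $sts^{-1}=N(t)t^{-1}$.
   Context: $C(V,q)=T(V)/\langle x\otimes x-q(x)\cdot1\rangle=C_0\oplus C_1$ is the Clifford algebra, $\Gamma(V,q)=\{u\in C(V,q)^\times: uVu^{-1}\subseteq V\}$ the Clifford group and $\Gamma^+(V,q)=\Gamma(V,q)\cap C_0(V,q)$. With $\tau$ the anti-involution reversing products of vectors, $N(u)=\tau(u)u\in F^*$ is the norm. *)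

theory Defs
  imports Complex_Main "HOL-Library.Poly_Mapping"
begin

text \<open>A word is a finite list of vectors; words form a (non-commutative) monoid
under concatenation, written additively so that the monoid algebra
('v word \<Rightarrow>0 'a) of Poly_Mapping is the free associative F-algebra on the set V.\<close>

datatype 'v word = Word (word_list: "'v list")

instantiation word :: (type) monoid_add
begin
definition zero_word_def: "0 = Word []"
definition plus_word_def: "u + w = Word (word_list u @ word_list w)"
instance by standard (auto simp: zero_word_def plus_word_def)
end

definition word_rev :: "'v word \<Rightarrow> 'v word" where
  "word_rev w = Word (rev (word_list w))"

type_synonym ('v, 'a) freealg = "'v word \<Rightarrow>\<^sub>0 'a"

definition iota :: "'v \<Rightarrow> ('v, 'a::field) freealg" where
  "iota v = Poly_Mapping.single (Word [v]) 1"

definition scal :: "'a::field \<Rightarrow> ('v, 'a) freealg" where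
  "scal c = Poly_Mapping.single 0 c"

definition tau :: "('v, 'a::field) freealg \<Rightarrow> ('v, 'a) freealg" where
  "tau x = Poly_Mapping.map_key word_rev x"

definition FA :: "'v set \<Rightarrow> ('v, 'a::field) freealg set" where
  "FA W = {x. \<forall>w \<in> Poly_Mapping.keys x. set (word_list w) \<subseteq> W}"

text \<open>Generators of the kernel of F<W> -> C(W,q): linearity relations (turning F<W>
into T(W)) together with the Clifford relations v v - q(v).\<close>
definition clif_gens ::
  "('a::field \<Rightarrow> 'v::ab_group_add \<Rightarrow> 'v) \<Rightarrow> ('v \<Rightarrow> 'a) \<Rightarrow> 'v set \<Rightarrow> ('v, 'a) freealg set" where
  "clif_gens scale q W =
     {iota (u + v) - iota u - iota v | u v. u \<in> W \<and> v \<in> W}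
   \<union> {iota (scale c v) - scal c * iota v | c v. v \<in> W}
   \<union> {iota v * iota v - scal (q v) | v. v \<in> W}"

inductive_set clif_ideal ::
  "('a::field \<Rightarrow> 'v::ab_group_add \<Rightarrow> 'v) \<Rightarrow> ('v \<Rightarrow> 'a) \<Rightarrow> 'v set \<Rightarrow> ('v, 'a) freealg set"
  for scale q W where
  gen: "x \<in> clif_gens scale q W \<Longrightarrow> x \<in> clif_ideal scale q W"
| zero: "0 \<in> clif_ideal scale q W"
| add: "x \<in> clif_ideal scale q W \<Longrightarrow> y \<in> clif_ideal scale q W \<Longrightarrow> x + y \<in> clif_ideal scale q W"
| lmult: "a \<in> FA W \<Longrightarrow> x \<in> clif_ideal scale q W \<Longrightarrow> a * x \<in> clif_ideal scale q W"
| rmult: "a \<in> FA W \<Longrightarrow> x \<in> clif_ideal scale q W \<Longrightarrow> x * a \<in> clif_ideal scale q W"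

definition cl_eq ::
  "('a::field \<Rightarrow> 'v::ab_group_add \<Rightarrow> 'v) \<Rightarrow> ('v \<Rightarrow> 'a) \<Rightarrow> 'v set \<Rightarrow> ('v, 'a) freealg \<Rightarrow> ('v, 'a) freealg \<Rightarrow> bool" where
  "cl_eq scale q W x y \<longleftrightarrow> x - y \<in> clif_ideal scale q W"

definition is_cl_inv where
  "is_cl_inv scale q W u u' \<longleftrightarrow> u' \<in> FA W \<and> cl_eq scale q W (u * u') 1 \<and> cl_eq scale q W (u' * u) 1"

definition cl_inv where
  "cl_inv scale q W u = (SOME u'. is_cl_inv scale q W u u')"

definition C0 :: "('a::field \<Rightarrow> 'v::ab_group_add \<Rightarrow> 'v) \<Rightarrow> ('v \<Rightarrow> 'a) \<Rightarrow> 'v set \<Rightarrow> ('v, 'a) freealg set" where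
  "C0 scale q W = {u \<in> FA W. \<exists>u' \<in> FA W.
      (\<forall>w \<in> Poly_Mapping.keys u'. even (length (word_list w))) \<and> cl_eq scale q W u u'}"

definition Gamma :: "('a::field \<Rightarrow> 'v::ab_group_add \<Rightarrow> 'v) \<Rightarrow> ('v \<Rightarrow> 'a) \<Rightarrow> 'v set \<Rightarrow> ('v, 'a) freealg set" where
  "Gamma scale q W = {u \<in> FA W. (\<exists>u'. is_cl_inv scale q W u u') \<and>
      (\<forall>v \<in> W. \<exists>v' \<in> W. cl_eq scale q W (u * iota v * cl_inv scale q W u) (iota v'))}"

definition Gamma_plus where
  "Gamma_plus scale q W = Gamma scale q W \<inter> C0 scale q W"

text \<open>Norm N(u) = tau(u) u (an element of C(W,q); it is a scalar for u in Gamma).\<close>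
definition Nrm :: "('v, 'a::field) freealg \<Rightarrow> ('v, 'a) freealg" where
  "Nrm u = tau u * u"

definition polar :: "('v::ab_group_add \<Rightarrow> 'a::field) \<Rightarrow> 'v \<Rightarrow> 'v \<Rightarrow> 'a" where
  "polar q u v = q (u + v) - q u - q v"

definition quadratic_form :: "('a::field \<Rightarrow> 'v::ab_group_add \<Rightarrow> 'v) \<Rightarrow> ('v \<Rightarrow> 'a) \<Rightarrow> bool" where
  "quadratic_form scale q \<longleftrightarrow>
     (\<forall>c v. q (scale c v) = c * c * q v) \<and>
     (\<forall>u u' v. polar q (u + u') v = polar q u v + polar q u' v) \<and>
     (\<forall>c u v. polar q (scale c u) v = c * polar q u v)"

definition nondeg_quad_subspace ::
  "('a::field \<Rightarrow> 'v::ab_group_add \<Rightarrow> 'v) \<Rightarrow> ('v \<Rightarrow> 'a) \<Rightarrow> 'v set \<Rightarrow> bool" where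
  "nondeg_quad_subspace scale q W \<longleftrightarrow>
     module.subspace scale W \<and>
     (\<exists>B. finite B \<and> B \<subseteq> W \<and> module.span scale B = W) \<and>
     (\<forall>u \<in> W. (\<forall>v \<in> W. polar q u v = 0) \<longrightarrow> u = 0)"

end

theory Submission
  imports Defs
begin


lemma FA_UNIV[simp]: "FA UNIV = UNIV" by (auto simp: FA_def)

lemma poly_sum_rep: "f = (\<Sum>k\<in>Poly_Mapping.keys f. Poly_Mapping.single k (Poly_Mapping.lookup f k))"
  by (rule poly_mapping_eqI) (auto simp: lookup_sum lookup_single when_def in_keys_iff)

lemma scal_comm: "scal c * (x::('v,'a::field) freealg) = x * scal c"
proof -
  have *: "scal c * Poly_Mapping.single k d = Poly_Mapping.single k d * scal c" for k and d::'a
    by (simp add: scal_def mult_single mult.commute)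
  have "scal c * (\<Sum>k\<in>Poly_Mapping.keys x. Poly_Mapping.single k (Poly_Mapping.lookup x k))
     = (\<Sum>k\<in>Poly_Mapping.keys x. Poly_Mapping.single k (Poly_Mapping.lookup x k)) * scal c"
    unfolding sum_distrib_left sum_distrib_right by (rule sum.cong[OF refl], rule *)
  then show ?thesis by (subst (1 2) poly_sum_rep[of x])
qed


lemma word_rev_plus: "word_rev (a + b) = word_rev b + word_rev a"
  by (simp add: word_rev_def plus_word_def)
lemma word_rev_rev[simp]: "word_rev (word_rev a) = a"
  by (simp add: word_rev_def)
lemma inj_word_rev: "inj word_rev"
  by (rule injI) (metis word_rev_rev)

lemma word_rev_zero[simp]: "word_rev 0 = 0"
  by (simp add: word_rev_def zero_word_def)

lemma tau_single: "tau (Poly_Mapping.single k c) = Poly_Mapping.single (word_rev k) c"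
  unfolding tau_def using map_key_single[OF inj_word_rev, of "word_rev k" c] by simp

lemma tau_add: "tau (x + y) = tau x + tau y"
  unfolding tau_def by (rule map_key_plus[OF inj_word_rev])

lemma tau_zero[simp]: "tau 0 = 0"
  unfolding tau_def by (rule map_key_zero[OF inj_word_rev])

lemma tau_sum: "tau (sum f A) = (\<Sum>a\<in>A. tau (f a))"
  by (induction A rule: infinite_finite_induct) (auto simp: tau_add)

lemma tau_neg: "tau (- x) = - tau x"
  unfolding eq_neg_iff_add_eq_0 by (simp add: tau_add[symmetric])
lemma tau_diff: "tau (x - y) = tau x - tau y"
  unfolding diff_conv_add_uminus tau_add tau_neg ..

lemma tau_single_mult: "tau (Poly_Mapping.single a c * Poly_Mapping.single b d :: ('v,'a::field) freealg)
     = tau (Poly_Mapping.single b d) * tau (Poly_Mapping.single a c)"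
  by (simp add: mult_single tau_single word_rev_plus mult.commute)

lemma tau_mult_sums:
  "tau ((\<Sum>a\<in>A. Poly_Mapping.single (k a) (c a)) * (\<Sum>b\<in>B. Poly_Mapping.single (l b) (d b)) :: ('v,'a::field) freealg)
   = tau (\<Sum>b\<in>B. Poly_Mapping.single (l b) (d b)) * tau (\<Sum>a\<in>A. Poly_Mapping.single (k a) (c a))"
proof -
  have e1: "tau ((\<Sum>a\<in>A. Poly_Mapping.single (k a) (c a)) * (\<Sum>b\<in>B. Poly_Mapping.single (l b) (d b)) :: ('v,'a::field) freealg)
     = (\<Sum>a\<in>A. \<Sum>b\<in>B. tau (Poly_Mapping.single (l b) (d b)) * tau (Poly_Mapping.single (k a) (c a)))"
    by (simp only: sum_product tau_sum tau_single_mult)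
  have e2: "(\<Sum>a\<in>A. \<Sum>b\<in>B. tau (Poly_Mapping.single (l b) (d b)) * tau (Poly_Mapping.single (k a) (c a))) = (\<Sum>b\<in>B. \<Sum>a\<in>A. tau (Poly_Mapping.single (l b) (d b)) * tau (Poly_Mapping.single (k a) (c a)))"
    by (rule sum.swap)
  have e3: "(\<Sum>b\<in>B. \<Sum>a\<in>A. tau (Poly_Mapping.single (l b) (d b)) * tau (Poly_Mapping.single (k a) (c a))) = tau (\<Sum>b\<in>B. Poly_Mapping.single (l b) (d b)) * tau (\<Sum>a\<in>A. Poly_Mapping.single (k a) (c a))"
    by (simp only: sum_product tau_sum)
  show ?thesis by (rule trans[OF e1 trans[OF e2 e3]])
qed

lemma tau_mult: "tau (x * y) = tau y * tau (x::('v,'a::field) freealg)"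
  using tau_mult_sums[of "\<lambda>a. a" "Poly_Mapping.lookup x" "Poly_Mapping.keys x" "\<lambda>a. a" "Poly_Mapping.lookup y" "Poly_Mapping.keys y"]
  by (simp only: poly_sum_rep[symmetric])

lemma tau_iota[simp]: "tau (iota v) = iota v"
  by (simp add: iota_def tau_single word_rev_def)
lemma tau_scal[simp]: "tau (scal c) = scal c"
  by (simp add: scal_def tau_single)
lemma tau_one[simp]: "tau 1 = 1"
  using tau_scal[of 1] by (simp add: scal_def)

lemma keys_tau: "Poly_Mapping.keys (tau x) = word_rev -` Poly_Mapping.keys x"
  unfolding tau_def by (rule keys_map_key[OF inj_word_rev])

lemma FA_tau: "x \<in> FA W \<Longrightarrow> tau x \<in> FA W"
  by (auto simp: FA_def keys_tau word_rev_def) (metis word.sel set_rev subsetD)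



context
  fixes scale :: "'a::field \<Rightarrow> 'v::ab_group_add \<Rightarrow> 'v" and q :: "'v \<Rightarrow> 'a"
begin

abbreviation II where "II \<equiv> clif_ideal scale q UNIV"
abbreviation ceq (infix "\<approx>" 50) where "x \<approx> y \<equiv> cl_eq scale q UNIV x y"

lemma I_lm: "x \<in> II \<Longrightarrow> a * x \<in> II"
  by (rule clif_ideal.lmult) auto
lemma I_rm: "x \<in> II \<Longrightarrow> x * a \<in> II"
  by (rule clif_ideal.rmult) auto
lemma I_neg: "x \<in> II \<Longrightarrow> - x \<in> II"
  using I_rm[of x "-1"] by simp
lemma I_add: "x \<in> II \<Longrightarrow> y \<in> II \<Longrightarrow> x + y \<in> II"
  by (rule clif_ideal.add)
lemma I_diff: "x \<in> II \<Longrightarrow> y \<in> II \<Longrightarrow> x - y \<in> II"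
  using I_add[OF _ I_neg, of x y] by simp

lemma ceq_refl[simp]: "x \<approx> x"
  by (simp add: cl_eq_def clif_ideal.zero)
lemma ceq_sym: "x \<approx> y \<Longrightarrow> y \<approx> x"
  unfolding cl_eq_def using I_neg by fastforce
lemma ceq_trans: "x \<approx> y \<Longrightarrow> y \<approx> z \<Longrightarrow> x \<approx> z"
  unfolding cl_eq_def using I_add by fastforce
lemma ceq_add: "x \<approx> x' \<Longrightarrow> y \<approx> y' \<Longrightarrow> x + y \<approx> x' + y'"
  unfolding cl_eq_def using I_add[of "x - x'" "y - y'"] by (simp add: algebra_simps)
lemma ceq_diff: "x \<approx> x' \<Longrightarrow> y \<approx> y' \<Longrightarrow> x - y \<approx> x' - y'"
  unfolding cl_eq_def using I_diff[of "x - x'" "y - y'"] by (simp add: algebra_simps)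
lemma ceq_neg: "x \<approx> x' \<Longrightarrow> - x \<approx> - x'"
  unfolding cl_eq_def using I_neg[of "x - x'"] by (simp add: algebra_simps)
lemma ceq_mult: "x \<approx> x' \<Longrightarrow> y \<approx> y' \<Longrightarrow> x * y \<approx> x' * y'"
proof -
  assume a: "x \<approx> x'" "y \<approx> y'"
  have "x * y - x' * y' = (x - x') * y + x' * (y - y')" by (simp add: algebra_simps)
  then show ?thesis using a unfolding cl_eq_def by (simp add: I_add I_lm I_rm)
qed
lemma ceq_ml: "y \<approx> y' \<Longrightarrow> a * y \<approx> a * y'" by (rule ceq_mult) simp_all
lemma ceq_mr: "y \<approx> y' \<Longrightarrow> y * a \<approx> y' * a" by (rule ceq_mult) simp_all
lemma ceq_eq: "x = y \<Longrightarrow> x \<approx> y" by simp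

lemma ideal_mono: "x \<in> clif_ideal scale q W \<Longrightarrow> x \<in> II"
proof (induction rule: clif_ideal.induct)
  case (gen x) then show ?case by (intro clif_ideal.gen) (auto simp: clif_gens_def)
qed (auto intro: clif_ideal.intros)

lemma ceq_lift: "cl_eq scale q W x y \<Longrightarrow> x \<approx> y"
  unfolding cl_eq_def by (rule ideal_mono)

lemma tau_gen: "x \<in> clif_gens scale q UNIV \<Longrightarrow> tau x = x"
  by (auto simp: clif_gens_def tau_diff tau_mult scal_comm)

lemma tau_ideal: "x \<in> II \<Longrightarrow> tau x \<in> II"
proof (induction rule: clif_ideal.induct)
  case (gen x) then show ?case by (simp add: tau_gen clif_ideal.gen)
next
  case (add x y) then show ?case by (simp add: tau_add I_add)
next
  case (lmult a x) then show ?case by (simp add: tau_mult I_rm)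
next
  case (rmult a x) then show ?case by (simp add: tau_mult I_lm)
qed (simp add: clif_ideal.zero)

lemma ceq_tau: "x \<approx> y \<Longrightarrow> tau x \<approx> tau y"
  unfolding cl_eq_def using tau_ideal by (fastforce simp: tau_diff[symmetric])

lemma ceq_sum: "(\<And>i. i \<in> S \<Longrightarrow> f i \<approx> g i) \<Longrightarrow> sum f S \<approx> sum g S"
  by (induction S rule: infinite_finite_induct) (auto intro: ceq_add)

lemma iota_add: "iota (u + v) \<approx> iota u + iota v"
  unfolding cl_eq_def by (rule clif_ideal.gen) (auto simp: clif_gens_def diff_diff_eq)

lemma iota_sq: "iota v * iota v \<approx> scal (q v)"
  unfolding cl_eq_def by (rule clif_ideal.gen) (auto simp: clif_gens_def)

lemma scal_add: "scal (a + b) = scal a + scal b"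
  by (simp add: scal_def single_add)

lemma anticomm:
  assumes "polar q u v = 0"
  shows "iota u * iota v \<approx> - (iota v * iota u)"
proof -
  have quv: "q (u + v) = q u + q v" using assms unfolding polar_def by (simp add: algebra_simps)
  have e1: "(iota u + iota v) * (iota u + iota v) \<approx> iota (u+v) * iota (u+v)"
    using ceq_mult[OF ceq_sym[OF iota_add] ceq_sym[OF iota_add]] .
  have e2: "iota (u+v) * iota (u+v) \<approx> iota u * iota u + iota v * iota v"
  proof -
    have eq: "scal (q (u+v)) = scal (q u) + scal (q v)" by (simp add: quv scal_add)
    have "scal (q (u+v)) \<approx> iota u * iota u + iota v * iota v"
      unfolding eq by (rule ceq_sym[OF ceq_add[OF iota_sq[of u] iota_sq[of v]]])
    then show ?thesis by (rule ceq_trans[OF iota_sq])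
  qed
  have "(iota u + iota v) * (iota u + iota v) \<approx> iota u * iota u + iota v * iota v"
    by (rule ceq_trans[OF e1 e2])
  then show ?thesis unfolding cl_eq_def by (simp add: algebra_simps)
qed

end


fun wprod :: "'v list \<Rightarrow> ('v,'a::field) freealg" where
  "wprod [] = 1" | "wprod (x#xs) = iota x * wprod xs"

lemma single_wprod: "Poly_Mapping.single (Word xs) c = scal c * (wprod xs :: ('v,'a::field) freealg)"
proof (induction xs)
  case Nil then show ?case by (simp add: scal_def zero_word_def[symmetric])
next
  case (Cons x xs)
  have "Poly_Mapping.single (Word (x#xs)) c = iota x * (Poly_Mapping.single (Word xs) c :: ('v,'a) freealg)"
    by (simp add: iota_def mult_single plus_word_def)
  also have "\<dots> = iota x * (scal c * wprod xs)" using Cons by simp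
  also have "\<dots> = scal c * wprod (x#xs)" by (simp add: mult.assoc[symmetric] scal_comm[of c "iota x"])
  finally show ?case .
qed

lemma single_key: "k \<in> Poly_Mapping.keys x \<Longrightarrow> x \<in> FA A \<Longrightarrow>
   \<exists>ws. k = Word ws \<and> set ws \<subseteq> A \<and> Poly_Mapping.single k c = scal c * wprod ws"
  by (cases k) (fastforce simp: FA_def single_wprod)

context
  fixes scale :: "'a::field \<Rightarrow> 'v::ab_group_add \<Rightarrow> 'v" and q :: "'v \<Rightarrow> 'a"
begin

abbreviation ceq' (infix "\<approx>" 50) where "x \<approx> y \<equiv> cl_eq scale q UNIV x y"

declare ceq_trans[trans]

lemma comm_wprod:
  assumes y: "\<forall>v\<in>A. iota v * y \<approx> y * iota v" and "set xs \<subseteq> A"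
  shows "wprod xs * y \<approx> y * wprod xs"
  using assms(2)
proof (induction xs)
  case Nil then show ?case by simp
next
  case (Cons a xs)
  have "wprod (a#xs) * y = iota a * (wprod xs * y)" by (simp add: mult.assoc)
  also have "\<dots> \<approx> iota a * (y * wprod xs)" using Cons by (intro ceq_ml) simp
  also have "\<dots> = (iota a * y) * wprod xs" by (simp add: mult.assoc)
  also have "\<dots> \<approx> (y * iota a) * wprod xs" using Cons y by (intro ceq_mr) simp
  also have "\<dots> = y * wprod (a#xs)" by (simp add: mult.assoc)
  finally show ?case .
qed

lemma comm_FA:
  assumes y: "\<forall>v\<in>A. iota v * y \<approx> y * iota v" and x: "x \<in> FA A"
  shows "x * y \<approx> y * x"
proof -
  have each: "Poly_Mapping.single k (Poly_Mapping.lookup x k) * y \<approx> y * Poly_Mapping.single k (Poly_Mapping.lookup x k)"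
    if k: "k \<in> Poly_Mapping.keys x" for k
  proof -
    obtain ws where ws: "set ws \<subseteq> A" "Poly_Mapping.single k (Poly_Mapping.lookup x k) = scal (Poly_Mapping.lookup x k) * wprod ws"
      using single_key[OF k x, where c="Poly_Mapping.lookup x k"] by blast
    have "scal (Poly_Mapping.lookup x k) * wprod ws * y = scal (Poly_Mapping.lookup x k) * (wprod ws * y)"
      by (simp add: mult.assoc)
    also have "\<dots> \<approx> scal (Poly_Mapping.lookup x k) * (y * wprod ws)"
      by (rule ceq_ml, rule comm_wprod[OF y ws(1)])
    also have "\<dots> = y * (scal (Poly_Mapping.lookup x k) * wprod ws)"
      by (metis mult.assoc scal_comm)
    finally show ?thesis unfolding ws(2) .
  qed
  have "(\<Sum>k\<in>Poly_Mapping.keys x. Poly_Mapping.single k (Poly_Mapping.lookup x k)) * y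
      \<approx> y * (\<Sum>k\<in>Poly_Mapping.keys x. Poly_Mapping.single k (Poly_Mapping.lookup x k))"
    unfolding sum_distrib_left sum_distrib_right by (rule ceq_sum, rule each)
  then show ?thesis by (simp only: poly_sum_rep[symmetric])
qed

lemma sign_wprod:
  assumes anti: "\<forall>b\<in>B. iota v * iota b \<approx> - (iota b * iota v)" and "set xs \<subseteq> B"
  shows "iota v * wprod xs \<approx> (if even (length xs) then wprod xs * iota v else - (wprod xs * iota v))"
  using assms(2)
proof (induction xs)
  case Nil then show ?case by simp
next
  case (Cons b xs)
  let ?R = "(if even (length xs) then wprod xs * iota v else - (wprod xs * iota v))"
  have "iota v * wprod (b#xs) = (iota v * iota b) * wprod xs" by (simp add: mult.assoc)
  also have "\<dots> \<approx> (- (iota b * iota v)) * wprod xs" using Cons anti by (intro ceq_mr) simp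
  also have "\<dots> = - (iota b * (iota v * wprod xs))" by (simp add: mult.assoc)
  also have "\<dots> \<approx> - (iota b * ?R)" using Cons by (intro ceq_neg ceq_ml) simp
  also have "\<dots> = (if even (length (b#xs)) then wprod (b#xs) * iota v else - (wprod (b#xs) * iota v))"
    by (simp add: mult.assoc)
  finally show ?case .
qed

lemma even_comm:
  assumes anti: "\<forall>b\<in>B. iota v * iota b \<approx> - (iota b * iota v)"
    and y: "y \<in> FA B" and ev: "\<forall>k\<in>Poly_Mapping.keys y. even (length (word_list k))"
  shows "iota v * y \<approx> y * iota v"
proof -
  have each: "iota v * Poly_Mapping.single k (Poly_Mapping.lookup y k) \<approx> Poly_Mapping.single k (Poly_Mapping.lookup y k) * iota v"
    if k: "k \<in> Poly_Mapping.keys y" for k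
  proof -
    obtain ws where ws: "k = Word ws" "set ws \<subseteq> B" "Poly_Mapping.single k (Poly_Mapping.lookup y k) = scal (Poly_Mapping.lookup y k) * wprod ws"
      using single_key[OF k y, where c="Poly_Mapping.lookup y k"] by blast
    have evws: "even (length ws)" using ev k ws(1) by auto
    have "iota v * (scal (Poly_Mapping.lookup y k) * wprod ws) = scal (Poly_Mapping.lookup y k) * (iota v * wprod ws)"
      by (metis mult.assoc scal_comm)
    also have "\<dots> \<approx> scal (Poly_Mapping.lookup y k) * (wprod ws * iota v)"
      using ceq_ml[OF sign_wprod[OF anti ws(2)]] evws by simp
    also have "\<dots> = scal (Poly_Mapping.lookup y k) * wprod ws * iota v"
      by (simp add: mult.assoc)
    finally show ?thesis unfolding ws(3) .
  qed
  have "iota v * (\<Sum>k\<in>Poly_Mapping.keys y. Poly_Mapping.single k (Poly_Mapping.lookup y k))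
      \<approx> (\<Sum>k\<in>Poly_Mapping.keys y. Poly_Mapping.single k (Poly_Mapping.lookup y k)) * iota v"
    unfolding sum_distrib_left sum_distrib_right by (rule ceq_sum, rule each)
  then show ?thesis by (simp only: poly_sum_rep[symmetric])
qed

lemma inv_lift: "is_cl_inv scale q W u a \<Longrightarrow> is_cl_inv scale q UNIV u a"
  unfolding is_cl_inv_def using ceq_lift by auto

lemma inv_unique:
  assumes "is_cl_inv scale q UNIV u a" "is_cl_inv scale q UNIV u b" shows "a \<approx> b"
proof -
  have ub: "u * b \<approx> 1" using assms by (simp add: is_cl_inv_def)
  have "a = a * 1" by simp
  also have "\<dots> \<approx> a * (u * b)" by (rule ceq_ml, rule ceq_sym, rule ub)
  also have "\<dots> = (a * u) * b" by (simp add: mult.assoc)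
  also have "\<dots> \<approx> 1 * b" using assms by (intro ceq_mr) (simp add: is_cl_inv_def)
  finally show ?thesis by simp
qed

lemma inv_comm:
  assumes c: "x * y \<approx> y * x" and b: "is_cl_inv scale q UNIV y b" shows "x * b \<approx> b * x"
proof -
  have by1: "y * b \<approx> 1" and b1: "b * y \<approx> 1" using b by (auto simp: is_cl_inv_def)
  have "x * b = 1 * x * b" by simp
  also have "\<dots> \<approx> (b * y) * x * b" by (rule ceq_mr, rule ceq_mr, rule ceq_sym, rule b1)
  also have "\<dots> = b * (y * x) * b" by (simp add: mult.assoc)
  also have "\<dots> \<approx> b * (x * y) * b" by (rule ceq_mr, rule ceq_ml, rule ceq_sym, rule c)
  also have "\<dots> = b * x * (y * b)" by (simp add: mult.assoc)
  also have "\<dots> \<approx> b * x * 1" by (rule ceq_ml, rule by1)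
  finally show ?thesis by simp
qed

end


lemma iota_FA: "v \<in> W \<Longrightarrow> (iota v :: ('v,'a::field) freealg) \<in> FA W"
  by (simp add: FA_def iota_def)

lemma keys_mult_ex: "k \<in> Poly_Mapping.keys (x * y) \<Longrightarrow>
   \<exists>a b. k = a + b \<and> a \<in> Poly_Mapping.keys x \<and> b \<in> Poly_Mapping.keys y"
  using keys_mult[of x y] by blast

lemma mult_FA: "x \<in> FA W \<Longrightarrow> y \<in> FA W \<Longrightarrow> (x * y :: ('v,'a::field) freealg) \<in> FA W"
  unfolding FA_def
proof (intro CollectI ballI)
  fix k assume x: "x \<in> {x. \<forall>w\<in>Poly_Mapping.keys x. set (word_list w) \<subseteq> W}"
    and y: "y \<in> {x. \<forall>w\<in>Poly_Mapping.keys x. set (word_list w) \<subseteq> W}"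
    and k: "k \<in> Poly_Mapping.keys (x * y)"
  obtain a b where "k = a + b" "a \<in> Poly_Mapping.keys x" "b \<in> Poly_Mapping.keys y"
    using keys_mult_ex[OF k] by blast
  then show "set (word_list k) \<subseteq> W" using x y by (auto simp: plus_word_def)
qed

lemma mult_even: "\<forall>k\<in>Poly_Mapping.keys x. even (length (word_list k)) \<Longrightarrow>
   \<forall>k\<in>Poly_Mapping.keys y. even (length (word_list k)) \<Longrightarrow>
   \<forall>k\<in>Poly_Mapping.keys (x * y :: ('v,'a::field) freealg). even (length (word_list k))"
proof
  fix k assume x: "\<forall>k\<in>Poly_Mapping.keys x. even (length (word_list k))"
    and y: "\<forall>k\<in>Poly_Mapping.keys y. even (length (word_list k))"
    and k: "k \<in> Poly_Mapping.keys (x * y)"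
  obtain a b where "k = a + b" "a \<in> Poly_Mapping.keys x" "b \<in> Poly_Mapping.keys y"
    using keys_mult_ex[OF k] by blast
  then show "even (length (word_list k))" using x y by (auto simp: plus_word_def)
qed

context
  fixes scale :: "'a::field \<Rightarrow> 'v::ab_group_add \<Rightarrow> 'v" and q :: "'v \<Rightarrow> 'a"
begin

abbreviation ceq3 (infix "\<approx>" 50) where "x \<approx> y \<equiv> cl_eq scale q UNIV x y"

declare ceq_trans[trans]

lemma comm_mult: "x * y \<approx> y * x \<Longrightarrow> x * z \<approx> z * x \<Longrightarrow> x * (y * z) \<approx> (y * z) * x"
proof -
  assume a: "x * y \<approx> y * x" "x * z \<approx> z * x"
  have "x * (y * z) = (x * y) * z" by (simp only: mult.assoc)
  also have "\<dots> \<approx> (y * x) * z" by (rule ceq_mr, rule a(1))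
  also have "\<dots> = y * (x * z)" by (simp only: mult.assoc)
  also have "\<dots> \<approx> y * (z * x)" by (rule ceq_ml, rule a(2))
  also have "\<dots> = (y * z) * x" by (simp only: mult.assoc)
  finally show ?thesis .
qed

lemma inv_mult:
  assumes "is_cl_inv scale q UNIV u a" "is_cl_inv scale q UNIV w b"
  shows "is_cl_inv scale q UNIV (u * w) (b * a)"
proof -
  have ua: "u * a \<approx> 1" "a * u \<approx> 1" and wb: "w * b \<approx> 1" "b * w \<approx> 1"
    using assms by (auto simp: is_cl_inv_def)
  have "u * w * (b * a) = u * (w * b) * a" by (simp only: mult.assoc)
  also have "\<dots> \<approx> u * 1 * a" by (rule ceq_mr, rule ceq_ml, rule wb(1))
  also have "\<dots> \<approx> 1" using ua(1) by simp
  finally have 1: "u * w * (b * a) \<approx> 1" .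
  have "b * a * (u * w) = b * (a * u) * w" by (simp only: mult.assoc)
  also have "\<dots> \<approx> b * 1 * w" by (rule ceq_mr, rule ceq_ml, rule ua(2))
  also have "\<dots> \<approx> 1" using wb(2) by simp
  finally have 2: "b * a * (u * w) \<approx> 1" .
  show ?thesis using 1 2 by (simp add: is_cl_inv_def)
qed

lemma commutes_even:
  assumes anti: "\<forall>v\<in>A. \<forall>b\<in>B. iota v * iota b \<approx> - (iota b * iota v)"
    and ye: "y \<approx> e" and e: "e \<in> FA B" "\<forall>k\<in>Poly_Mapping.keys e. even (length (word_list k))"
    and x: "x \<in> FA A"
  shows "x * y \<approx> y * x"
proof -
  have "\<forall>v\<in>A. iota v * e \<approx> e * iota v"
    using even_comm[OF _ e] anti by blast
  then have xe: "x * e \<approx> e * x" by (rule comm_FA[OF _ x])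
  have "x * y \<approx> x * e" by (rule ceq_ml, rule ye)
  also have "\<dots> \<approx> e * x" by (rule xe)
  also have "\<dots> \<approx> y * x" by (rule ceq_mr, rule ceq_sym, rule ye)
  finally show ?thesis .
qed

lemma C0_even:
  assumes "t \<in> C0 scale q W"
  obtains e where "e \<in> FA W" "\<forall>k\<in>Poly_Mapping.keys e. even (length (word_list k))" "t \<approx> e"
  using assms unfolding C0_def by (auto intro: ceq_lift)

lemma tau_even:
  assumes "e \<in> FA W" "\<forall>k\<in>Poly_Mapping.keys e. even (length (word_list k))"
  shows "tau e \<in> FA W" "\<forall>k\<in>Poly_Mapping.keys (tau e). even (length (word_list k))"
  using assms by (auto simp: FA_tau keys_tau word_rev_def)

lemma inv_some: "\<exists>a. is_cl_inv scale q W u a \<Longrightarrow> is_cl_inv scale q W u (cl_inv scale q W u)"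
  unfolding cl_inv_def by (rule someI_ex)

end


context
  fixes scale :: "'a::field \<Rightarrow> 'v::ab_group_add \<Rightarrow> 'v" and q :: "'v \<Rightarrow> 'a"
begin

abbreviation ceq4 (infix "\<approx>" 50) where "x \<approx> y \<equiv> cl_eq scale q UNIV x y"

declare ceq_trans[trans]

lemma main_aux:
  fixes V1 V2 :: "'v set" and t1 t2 s1 s2 :: "('v, 'a) freealg"
  assumes dsum: "\<forall>v. \<exists>v1 \<in> V1. \<exists>v2 \<in> V2. v = v1 + v2"
    and orth: "\<forall>v1 \<in> V1. \<forall>v2 \<in> V2. polar q v1 v2 = 0"
    and t1: "t1 \<in> Gamma_plus scale q V1"
    and t2: "t2 \<in> Gamma_plus scale q V2"
    and s1: "s1 \<in> Gamma scale q V1"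
    and s2: "s2 \<in> Gamma scale q V2"
    and h1: "cl_eq scale q V1 (s1 * t1 * cl_inv scale q V1 s1) (Nrm t1 * cl_inv scale q V1 t1)"
    and h2: "cl_eq scale q V2 (s2 * t2 * cl_inv scale q V2 s2) (Nrm t2 * cl_inv scale q V2 t2)"
  shows "t1 * t2 \<in> Gamma_plus scale q UNIV \<and>
         (\<exists>s'. is_cl_inv scale q UNIV (s1 * s2) s') \<and>
         cl_eq scale q UNIV
           ((s1 * s2) * (t1 * t2) * cl_inv scale q UNIV (s1 * s2))
           (Nrm (t1 * t2) * cl_inv scale q UNIV (t1 * t2))"
proof -
  define b1 where "b1 = cl_inv scale q V1 t1"
  define b2 where "b2 = cl_inv scale q V2 t2"
  define a1 where "a1 = cl_inv scale q V1 s1"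
  define a2 where "a2 = cl_inv scale q V2 s2"
  have t1G: "t1 \<in> Gamma scale q V1" "t1 \<in> C0 scale q V1" using t1 by (auto simp: Gamma_plus_def)
  have t2G: "t2 \<in> Gamma scale q V2" "t2 \<in> C0 scale q V2" using t2 by (auto simp: Gamma_plus_def)
  have ib1: "is_cl_inv scale q V1 t1 b1" unfolding b1_def
    by (rule inv_some) (use t1G in \<open>simp add: Gamma_def\<close>)
  have ib2: "is_cl_inv scale q V2 t2 b2" unfolding b2_def
    by (rule inv_some) (use t2G in \<open>simp add: Gamma_def\<close>)
  have ia1: "is_cl_inv scale q V1 s1 a1" unfolding a1_def
    by (rule inv_some) (use s1 in \<open>simp add: Gamma_def\<close>)
  have ia2: "is_cl_inv scale q V2 s2 a2" unfolding a2_def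
    by (rule inv_some) (use s2 in \<open>simp add: Gamma_def\<close>)
  have Ib1: "is_cl_inv scale q UNIV t1 b1" using inv_lift[OF ib1] .
  have Ib2: "is_cl_inv scale q UNIV t2 b2" using inv_lift[OF ib2] .
  have Ia1: "is_cl_inv scale q UNIV s1 a1" using inv_lift[OF ia1] .
  have Ia2: "is_cl_inv scale q UNIV s2 a2" using inv_lift[OF ia2] .
  have FA: "t1 \<in> FA V1" "b1 \<in> FA V1" "s1 \<in> FA V1" "a1 \<in> FA V1"
           "t2 \<in> FA V2" "b2 \<in> FA V2" "s2 \<in> FA V2" "a2 \<in> FA V2"
    using t1G s1 t2G s2 ib1 ib2 ia1 ia2 by (auto simp: Gamma_def is_cl_inv_def)
  have tb: "t1 * b1 \<approx> 1" "t2 * b2 \<approx> 1" using Ib1 Ib2 by (auto simp: is_cl_inv_def)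
  obtain e1 where e1: "e1 \<in> FA V1" "\<forall>k\<in>Poly_Mapping.keys e1. even (length (word_list k))" "t1 \<approx> e1"
    using C0_even[OF t1G(2)] by blast
  obtain e2 where e2: "e2 \<in> FA V2" "\<forall>k\<in>Poly_Mapping.keys e2. even (length (word_list k))" "t2 \<approx> e2"
    using C0_even[OF t2G(2)] by blast
  have anti12: "\<forall>v\<in>V1. \<forall>b\<in>V2. iota v * iota b \<approx> - (iota b * iota v)"
    using orth by (auto intro: anticomm)
  have anti21: "\<forall>v\<in>V2. \<forall>b\<in>V1. iota v * iota b \<approx> - (iota b * iota v)"
  proof (intro ballI)
    fix v b assume v: "v \<in> V2" and b: "b \<in> V1"
    have "polar q v b = polar q b v" by (simp add: polar_def add.commute)
    also have "\<dots> = 0" using orth v b by blast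
    finally show "iota v * iota b \<approx> - (iota b * iota v)" by (rule anticomm)
  qed
  have CT2: "x * t2 \<approx> t2 * x" if "x \<in> FA V1" for x
    by (rule commutes_even[OF anti12 e2(3) e2(1,2) that])
  have CT1: "x * t1 \<approx> t1 * x" if "x \<in> FA V2" for x
    by (rule commutes_even[OF anti21 e1(3) e1(1,2) that])
  have CTau2: "x * tau t2 \<approx> tau t2 * x" if "x \<in> FA V1" for x
    by (rule commutes_even[OF anti12 ceq_tau[OF e2(3)] tau_even[OF e2(1,2)] that])
  have CB2: "x * b2 \<approx> b2 * x" if "x \<in> FA V1" for x
    by (rule inv_comm[OF CT2[OF that] Ib2])
  have Tinv: "is_cl_inv scale q UNIV (t1 * t2) (b2 * b1)" by (rule inv_mult[OF Ib1 Ib2])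
  have Sinv: "is_cl_inv scale q UNIV (s1 * s2) (a2 * a1)" by (rule inv_mult[OF Ia1 Ia2])
  have T: "cl_inv scale q UNIV (t1 * t2) \<approx> b2 * b1"
    by (rule inv_unique[OF inv_some Tinv]) (use Tinv in blast)
  have S: "cl_inv scale q UNIV (s1 * s2) \<approx> a2 * a1"
    by (rule inv_unique[OF inv_some Sinv]) (use Sinv in blast)
  have C0: "t1 * t2 \<in> C0 scale q UNIV"
    unfolding C0_def using mult_even[OF e1(2) e2(2)] ceq_mult[OF e1(3) e2(3)] by auto
  have conj: "\<exists>v'\<in>UNIV. t1 * t2 * iota v * cl_inv scale q UNIV (t1 * t2) \<approx> iota v'" for v
  proof -
    obtain v1 v2 where v: "v1 \<in> V1" "v2 \<in> V2" "v = v1 + v2" using dsum by blast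
    obtain v1' where "v1' \<in> V1" and v1': "t1 * iota v1 * b1 \<approx> iota v1'"
      using t1G(1) v(1) unfolding Gamma_def b1_def by (blast intro: ceq_lift)
    obtain v2' where v2V: "v2' \<in> V2" and v2': "t2 * iota v2 * b2 \<approx> iota v2'"
      using t2G(1) v(2) unfolding Gamma_def b2_def by (blast intro: ceq_lift)
    have A: "t1 * t2 * iota v1 * (b2 * b1) \<approx> iota v1'"
    proof -
      have "t1 * t2 * iota v1 * (b2 * b1) = t1 * (t2 * iota v1) * b2 * b1" by (simp only: mult.assoc)
      also have "\<dots> \<approx> t1 * (iota v1 * t2) * b2 * b1"
        by (rule ceq_mr, rule ceq_mr, rule ceq_ml, rule ceq_sym, rule CT2, rule iota_FA, rule v(1))
      also have "\<dots> = t1 * iota v1 * (t2 * b2) * b1" by (simp only: mult.assoc)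
      also have "\<dots> \<approx> t1 * iota v1 * 1 * b1" by (rule ceq_mr, rule ceq_ml, rule tb(2))
      also have "\<dots> = t1 * iota v1 * b1" by simp
      also have "\<dots> \<approx> iota v1'" by (rule v1')
      finally show ?thesis .
    qed
    have B: "t1 * t2 * iota v2 * (b2 * b1) \<approx> iota v2'"
    proof -
      have "t1 * t2 * iota v2 * (b2 * b1) = t1 * (t2 * iota v2 * b2) * b1" by (simp only: mult.assoc)
      also have "\<dots> \<approx> t1 * iota v2' * b1" by (rule ceq_mr, rule ceq_ml, rule v2')
      also have "\<dots> \<approx> iota v2' * t1 * b1"
        by (rule ceq_mr, rule ceq_sym, rule CT1, rule iota_FA, rule v2V)
      also have "\<dots> = iota v2' * (t1 * b1)" by (simp only: mult.assoc)
      also have "\<dots> \<approx> iota v2' * 1" by (rule ceq_ml, rule tb(1))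
      finally show ?thesis by simp
    qed
    have "t1 * t2 * iota v * cl_inv scale q UNIV (t1 * t2) \<approx> t1 * t2 * iota v * (b2 * b1)"
      by (rule ceq_ml, rule T)
    also have "\<dots> \<approx> t1 * t2 * (iota v1 + iota v2) * (b2 * b1)"
      by (rule ceq_mr, rule ceq_ml) (unfold v(3), rule iota_add)
    also have "\<dots> = t1 * t2 * iota v1 * (b2 * b1) + t1 * t2 * iota v2 * (b2 * b1)"
      by (simp add: algebra_simps)
    also have "\<dots> \<approx> iota v1' + iota v2'" by (rule ceq_add[OF A B])
    also have "\<dots> \<approx> iota (v1' + v2')" by (rule ceq_sym, rule iota_add)
    finally show ?thesis by blast
  qed
  have GP: "t1 * t2 \<in> Gamma_plus scale q UNIV"
    unfolding Gamma_plus_def Gamma_def using C0 Tinv conj by (simp add: FA_UNIV) blast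
  have h1': "s1 * t1 * a1 \<approx> Nrm t1 * b1" using ceq_lift[OF h1] unfolding a1_def b1_def .
  have h2': "s2 * t2 * a2 \<approx> Nrm t2 * b2" using ceq_lift[OF h2] unfolding a2_def b2_def .
  have a1N: "a1 * (Nrm t2 * b2) \<approx> (Nrm t2 * b2) * a1"
    unfolding Nrm_def by (rule comm_mult[OF comm_mult[OF CTau2 CT2] CB2]) (use FA in auto)
  have X1: "tau t1 * t1 * b1 \<in> FA V1" using FA by (intro mult_FA FA_tau) auto
  define X where "X = tau t1 * t1 * b1 * tau t2"
  have L: "(s1 * s2) * (t1 * t2) * cl_inv scale q UNIV (s1 * s2) \<approx> X"
  proof -
    have "(s1 * s2) * (t1 * t2) * cl_inv scale q UNIV (s1 * s2) \<approx> (s1 * s2) * (t1 * t2) * (a2 * a1)"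
      by (rule ceq_ml, rule S)
    also have "\<dots> = s1 * (s2 * t1) * t2 * a2 * a1" by (simp only: mult.assoc)
    also have "\<dots> \<approx> s1 * (t1 * s2) * t2 * a2 * a1"
      by (rule ceq_mr, rule ceq_mr, rule ceq_mr, rule ceq_ml, rule CT1, rule FA(7))
    also have "\<dots> = s1 * t1 * (s2 * t2 * a2) * a1" by (simp only: mult.assoc)
    also have "\<dots> \<approx> s1 * t1 * (Nrm t2 * b2) * a1" by (rule ceq_mr, rule ceq_ml, rule h2')
    also have "\<dots> = s1 * t1 * ((Nrm t2 * b2) * a1)" by (simp only: mult.assoc)
    also have "\<dots> \<approx> s1 * t1 * (a1 * (Nrm t2 * b2))" by (rule ceq_ml, rule ceq_sym, rule a1N)
    also have "\<dots> = (s1 * t1 * a1) * (Nrm t2 * b2)" by (simp only: mult.assoc)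
    also have "\<dots> \<approx> (Nrm t1 * b1) * (Nrm t2 * b2)" by (rule ceq_mr, rule h1')
    also have "\<dots> = tau t1 * t1 * b1 * tau t2 * (t2 * b2)" by (simp only: Nrm_def mult.assoc)
    also have "\<dots> \<approx> tau t1 * t1 * b1 * tau t2 * 1" by (rule ceq_ml, rule tb(2))
    also have "\<dots> = X" by (simp add: X_def)
    finally show ?thesis .
  qed
  have R: "Nrm (t1 * t2) * cl_inv scale q UNIV (t1 * t2) \<approx> X"
  proof -
    have "Nrm (t1 * t2) * cl_inv scale q UNIV (t1 * t2) \<approx> Nrm (t1 * t2) * (b2 * b1)"
      by (rule ceq_ml, rule T)
    also have "\<dots> = tau t2 * (tau t1 * t1) * (t2 * b2) * b1" by (simp only: Nrm_def tau_mult mult.assoc)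
    also have "\<dots> \<approx> tau t2 * (tau t1 * t1) * 1 * b1" by (rule ceq_mr, rule ceq_ml, rule tb(2))
    also have "\<dots> = tau t2 * (tau t1 * t1 * b1)" by (simp add: mult.assoc)
    also have "\<dots> \<approx> (tau t1 * t1 * b1) * tau t2" by (rule ceq_sym, rule CTau2, rule X1)
    also have "\<dots> = X" by (simp add: X_def)
    finally show ?thesis .
  qed
  show ?thesis using GP Sinv ceq_trans[OF L ceq_sym[OF R]] by blast
qed
end


theorem lemma5p2:
  fixes scale :: "'a::field \<Rightarrow> 'v::ab_group_add \<Rightarrow> 'v"
    and q :: "'v \<Rightarrow> 'a"
    and V1 V2 :: "'v set"
    and t1 t2 s1 s2 :: "('v, 'a) freealg"
  assumes char: "(2::'a) \<noteq> 0"
    and vs: "vector_space scale"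
    and qf: "quadratic_form scale q"
    and nd1: "nondeg_quad_subspace scale q V1"
    and nd2: "nondeg_quad_subspace scale q V2"
    and dsum: "V1 \<inter> V2 = {0}" "\<forall>v. \<exists>v1 \<in> V1. \<exists>v2 \<in> V2. v = v1 + v2"
    and orth: "\<forall>v1 \<in> V1. \<forall>v2 \<in> V2. polar q v1 v2 = 0"
    and t1: "t1 \<in> Gamma_plus scale q V1"
    and t2: "t2 \<in> Gamma_plus scale q V2"
    and s1: "s1 \<in> Gamma scale q V1"
    and s2: "s2 \<in> Gamma scale q V2"
    and h1: "cl_eq scale q V1 (s1 * t1 * cl_inv scale q V1 s1) (Nrm t1 * cl_inv scale q V1 t1)"
    and h2: "cl_eq scale q V2 (s2 * t2 * cl_inv scale q V2 s2) (Nrm t2 * cl_inv scale q V2 t2)"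
  shows "t1 * t2 \<in> Gamma_plus scale q UNIV \<and>
         (\<exists>s'. is_cl_inv scale q UNIV (s1 * s2) s') \<and>
         cl_eq scale q UNIV
           ((s1 * s2) * (t1 * t2) * cl_inv scale q UNIV (s1 * s2))
           (Nrm (t1 * t2) * cl_inv scale q UNIV (t1 * t2))"
  by (rule main_aux[OF dsum(2) orth t1 t2 s1 s2 h1 h2])

end
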